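(* Let $n\ge2$, $c_1,\dots,c_{n-1}\ge0$, and for $p=1,\dots,n-1$ let $r_p\ge0$ be the largest non-negative real root of $x\mapsto Q_p(x,1)$, where $Q_p(x,y)=\frac{x^p}{p!}-\sum_{k=1}^{p}\frac{c_k}{(p-k)!}x^{p-k}y^k$. Then for each $p=1,\dots,n-2$ we have $r_p\le r_{p+1}$, with strict inequality $r_p<r_{p+1}$ whenever $r_{p+1}>0$. Equivalently, for Kähler classes $\alpha,\beta$ and factor classes $\tau_p(\alpha,\beta)=\alpha-r_p\beta$, the class $\tau_p(\alpha,\beta)-\tau_{p+1}(\alpha,\beta)$ is a non-negative multiple of $\beta$, and a strictly positive multiple whenever $\tau_{p+1}(\alpha,\beta)\ne\alpha$.
   Context: $Q_p(x,y)$ is the homogeneous degree-$p$ part of $\exp(x)(1-P(y))$ with $P(y)=\sum_{k=1}^{n-1}c_ky^k$. It factors as $(x-r_py)\tilde Q_p(x,y)$ with $\tilde Q_p$ having non-negative coefficients; $\tau_p(\alpha,\beta):=\alpha-r_p\beta$ is the factor class at dimension $p$. *)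

theory Defs
  imports Complex_Main
begin

definition Qp1 :: "(nat \<Rightarrow> real) \<Rightarrow> nat \<Rightarrow> real \<Rightarrow> real" where
  "Qp1 c p x = x ^ p / fact p - (\<Sum>k=1..p. c k / fact (p - k) * x ^ (p - k))"

definition rp :: "(nat \<Rightarrow> real) \<Rightarrow> nat \<Rightarrow> real" where
  "rp c p = (GREATEST x. x \<ge> 0 \<and> Qp1 c p x = 0)"

end

theory Submission imports Defs begin

lemma Q0: "Qp1 c 0 x = 1" by (simp add: Qp1_def)
lemma Q1: "Qp1 c (Suc 0) x = x - c (Suc 0)" by (simp add: Qp1_def)

lemma Qsuc_form: "Qp1 c (Suc p) x = x^Suc p / fact (Suc p) - (\<Sum>k=1..p. c k / fact (Suc (p-k)) * x^Suc (p-k)) - c (Suc p)"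
proof -
  have "(\<Sum>k=1..Suc p. c k / fact (Suc p - k) * x ^ (Suc p - k)) =
        (\<Sum>k=1..p. c k / fact (Suc p - k) * x ^ (Suc p - k)) + c (Suc p)"
    by simp
  moreover have "(\<Sum>k=1..p. c k / fact (Suc p - k) * x ^ (Suc p - k)) = (\<Sum>k=1..p. c k / fact (Suc (p-k)) * x^Suc (p-k))"
    by (rule sum.cong) (auto simp: Suc_diff_le)
  ultimately show ?thesis unfolding Qp1_def by simp
qed

lemma dpow: "((\<lambda>x::real. x^Suc m / fact (Suc m)) has_real_derivative x^m / fact m) (at x)"
proof -
  have "((\<lambda>x::real. x^Suc m / fact (Suc m)) has_real_derivative real (Suc m) * x^m / fact (Suc m)) (at x)"
    using DERIV_divide[OF DERIV_pow[of "Suc m" x] DERIV_const[of "fact (Suc m)" "at x"]] by simp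
  moreover have "real (Suc m) * x^m / fact (Suc m) = x^m / fact m"
    by (simp add: fact_Suc del: of_nat_Suc)
  ultimately show ?thesis by simp
qed

lemma dQ: "(Qp1 c (Suc p) has_real_derivative Qp1 c p x) (at x)"
proof -
  have e: "Qp1 c (Suc p) = (\<lambda>x. x^Suc p / fact (Suc p) - (\<Sum>k=1..p. c k * (x^Suc (p-k) / fact (Suc (p-k)))) - c (Suc p))"
    by (rule ext) (simp add: Qsuc_form)
  have "((\<lambda>x. x^Suc p / fact (Suc p) - (\<Sum>k=1..p. c k * (x^Suc (p-k) / fact (Suc (p-k)))) - c (Suc p))
     has_real_derivative x^p/fact p - (\<Sum>k=1..p. c k * (x^(p-k) / fact (p-k))) - 0) (at x)"
    by (intro derivative_intros dpow DERIV_cmult)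
  then show ?thesis unfolding e Qp1_def by (simp add: field_simps)
qed

lemma nonvanish: "a < b \<Longrightarrow> \<forall>x. a < x \<and> x < b \<longrightarrow> Qp1 c q x = 0 \<Longrightarrow> False"
proof (induction q)
  case 0
  then show ?case using Q0[of c "(a+b)/2"] by (auto simp: field_simps)
next
  case (Suc q)
  have "\<forall>x. a < x \<and> x < b \<longrightarrow> Qp1 c q x = 0"
  proof (intro allI impI)
    fix x assume x: "a < x \<and> x < b"
    have "((\<lambda>_. 0::real) has_real_derivative 0) (at x)" by simp
    then have "(Qp1 c (Suc q) has_real_derivative 0) (at x)"
      by (rule has_field_derivative_transform_within_open[where S="{a<..<b}"]) (use x Suc.prems in auto)
    then show "Qp1 c q x = 0" using dQ[of c q x] DERIV_unique by blast
  qed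
  then show ?case using Suc by blast
qed

definition H :: "(nat \<Rightarrow> real) \<Rightarrow> nat \<Rightarrow> real \<Rightarrow> bool" where
  "H c p s \<longleftrightarrow> s \<ge> 0 \<and> Qp1 c p s = 0 \<and> (\<forall>x. 0\<le>x \<and> x\<le>s \<longrightarrow> Qp1 c p x \<le> 0) \<and>
     (\<forall>x>s. Qp1 c p x > 0) \<and> (\<forall>x y. s\<le>x \<and> x\<le>y \<longrightarrow> Qp1 c p x \<le> Qp1 c p y)"

lemma H_rp: "H c p s \<Longrightarrow> rp c p = s"
  unfolding rp_def
proof (rule Greatest_equality)
  assume h: "H c p s"
  then show "0 \<le> s \<and> Qp1 c p s = 0" by (simp add: H_def)
  fix y assume y: "0 \<le> y \<and> Qp1 c p y = 0"
  show "y \<le> s"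
  proof (rule ccontr)
    assume "\<not> y \<le> s"
    then have "Qp1 c p y > 0" using h by (simp add: H_def)
    then show False using y by simp
  qed
qed

lemma H1: "c 1 \<ge> 0 \<Longrightarrow> H c 1 (c 1)"
  by (simp add: H_def Q1)

lemma H_step:
  assumes h: "H c p s" and cp: "c (Suc p) \<ge> 0"
  shows "\<exists>s'. H c (Suc p) s' \<and> s \<le> s' \<and> (s' > 0 \<longrightarrow> s < s')"
proof -
  let ?f = "Qp1 c (Suc p)"
  have s0: "s \<ge> 0" and Qs: "Qp1 c p s = 0" and Qle: "\<And>x. 0\<le>x \<Longrightarrow> x\<le>s \<Longrightarrow> Qp1 c p x \<le> 0"
    and Qgt: "\<And>x. x > s \<Longrightarrow> Qp1 c p x > 0"
    and Qmono: "\<And>x y. s\<le>x \<Longrightarrow> x\<le>y \<Longrightarrow> Qp1 c p x \<le> Qp1 c p y"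
    using h unfolding H_def by auto
  have cont: "continuous_on S ?f" for S
    by (rule continuous_at_imp_continuous_on) (use DERIV_isCont[OF dQ] in blast)
  have f0: "?f 0 = - c (Suc p)" by (simp add: Qsuc_form)
  have A: "?f x \<le> ?f 0" if "0 \<le> x" "x \<le> s" for x
    by (rule DERIV_nonpos_imp_nonincreasing[OF that(1)]) (use dQ Qle that in fastforce)
  have B: "?f x < ?f y" if "s \<le> x" "x < y" for x y
    by (rule DERIV_pos_imp_increasing_open[OF that(2)]) (use dQ Qgt that cont in force)+
  define d where "d = Qp1 c p (s+1)"
  have d: "d > 0" unfolding d_def by (rule Qgt) simp
  define y where "y = s + 1 + (\<bar>?f (s+1)\<bar> + 1) / d"
  have y1: "y > s + 1" unfolding y_def using d by (simp add: field_simps)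
  obtain z where z: "s+1 < z" "z < y" "?f y - ?f (s+1) = (y - (s+1)) * Qp1 c p z"
    using MVT2[OF y1, of ?f "Qp1 c p"] dQ by blast
  have "Qp1 c p z \<ge> d" unfolding d_def by (rule Qmono) (use z in auto)
  then have "(y - (s+1)) * Qp1 c p z \<ge> (y - (s+1)) * d"
    by (rule mult_left_mono) (use y1 in auto)
  also have "(y - (s+1)) * d = \<bar>?f (s+1)\<bar> + 1" unfolding y_def using d by simp
  finally have fy: "?f y > 0" using z(3) by linarith
  have fs: "?f s \<le> 0" using A[OF s0 order_refl] f0 cp by linarith
  obtain s' where s': "s \<le> s'" "s' \<le> y" "?f s' = 0"
    using IVT'[of ?f s 0 y, OF fs] fy y1 cont by fastforce
  have Hs': "H c (Suc p) s'"
    unfolding H_def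
  proof (intro conjI allI impI)
    show "0 \<le> s'" using s0 s' by linarith
    show "?f s' = 0" by fact
    fix x
    show "0 \<le> x \<and> x \<le> s' \<Longrightarrow> ?f x \<le> 0"
    proof -
      assume x: "0 \<le> x \<and> x \<le> s'"
      show ?thesis
      proof (cases "x \<le> s")
        case True then show ?thesis using A[of x] x f0 cp by linarith
      next
        case False
        then show ?thesis using B[of x s'] x s' by (cases "x = s'") auto
      qed
    qed
    show "s' < x \<Longrightarrow> 0 < ?f x" using B[of s' x] s' by auto
    fix y
    show "s' \<le> x \<and> x \<le> y \<Longrightarrow> ?f x \<le> ?f y" using B[of x y] s' by (cases "x = y") auto
  qed
  have strict: "s < s'" if pos: "s' > 0"
  proof (rule ccontr)
    assume "\<not> s < s'"
    then have ss: "s = s'" using s' by simp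
    have "\<forall>x. 0 < x \<and> x < s \<longrightarrow> ?f x = 0"
    proof (intro allI impI)
      fix x assume x: "0 < x \<and> x < s"
      have "?f x \<le> 0" using A[of x] x f0 cp by linarith
      moreover have "?f x \<ge> ?f s"
        by (rule DERIV_nonpos_imp_nonincreasing) (use x dQ Qle in fastforce)+
      ultimately show "?f x = 0" using s' ss by simp
    qed
    then show False using nonvanish[of 0 s c "Suc p"] pos ss by simp
  qed
  show ?thesis using Hs' s' strict by blast
qed

lemma exH: "1 \<le> p \<Longrightarrow> (\<And>k. 1 \<le> k \<Longrightarrow> k \<le> p \<Longrightarrow> c k \<ge> 0) \<Longrightarrow> \<exists>s. H c p s"
proof (induction p rule: dec_induct)
  case base
  then show ?case using H1 by auto
next
  case (step m)
  then obtain s where "H c m s" by auto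
  then show ?case using H_step[of c m s] step.prems step.hyps by auto
qed

theorem lemma5p4:
  fixes n :: nat and c :: "nat \<Rightarrow> real"
  assumes "n \<ge> 2"
    and "\<And>k. 1 \<le> k \<Longrightarrow> k \<le> n - 1 \<Longrightarrow> c k \<ge> 0"
  shows "\<forall>p. 1 \<le> p \<and> p \<le> n - 2 \<longrightarrow>
           rp c p \<le> rp c (Suc p) \<and> (rp c (Suc p) > 0 \<longrightarrow> rp c p < rp c (Suc p))"
proof (intro allI impI)
  fix p assume p: "1 \<le> p \<and> p \<le> n - 2"
  obtain s where hs: "H c p s" using exH[of p c] p assms by fastforce
  have "c (Suc p) \<ge> 0" using assms p by auto
  then obtain s' where "H c (Suc p) s'" "s \<le> s'" "s' > 0 \<longrightarrow> s < s'"
    using H_step[OF hs] by blast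
  then show "rp c p \<le> rp c (Suc p) \<and> (rp c (Suc p) > 0 \<longrightarrow> rp c p < rp c (Suc p))"
    using H_rp hs by metis
qed

end
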